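(* Assume (i) $\eta^t=1/\sqrt t$ for all $t$; (ii) $\rho^t>0$ is nondecreasing and $\rho^t\le\rho^{\max}$ for all $t$; (iii) $f_p(\cdot)=f_p(\cdot;\mathcal{D}_p)$ is $L$-Lipschitz on $\mathcal{W}$ with respect to the Euclidean norm. Fix $t$ and $p$, let $w^{t+1},\lambda^t_p,z^t_p\in\mathbb{R}^{J\times K}$ and a noise realization $\tilde\xi^t_p\in\mathbb{R}^{J\times K}$ be given, let $$z^{t+1}_p=\operatorname{argmin}_{z\in\mathcal{W}}\langle f'_p(z^t_p),z\rangle+\tfrac{\rho^t}{2}\big\|w^{t+1}-z+\tfrac1{\rho^t}(\lambda^t_p-\tilde\xi^t_p)\big\|^2+\tfrac1{2\eta^t}\|z-z^t_p\|^2,$$ and $\lambda^{t+1}_p=\lambda^t_p+\rho^t(w^{t+1}-z^{t+1}_p)$. Then for all $z_p\in\mathcal{W}$, $$f_p(z^t_p)-f_p(z_p)-\langle\lambda^{t+1}_p,z^{t+1}_p-z_p\rangle\le\frac{\eta^t\|f'_p(z^t_p)+\tilde\xi^t_p\|^2}{2}+\frac1{2\eta^t}\big(\|z_p-z^t_p\|^2-\|z_p-z^{t+1}_p\|^2\big)+\langle\tilde\xi^t_p,z_p-z^t_p\rangle.$$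
   Context: $\mathbb{R}^{J\times K}$ carries the Frobenius inner product and norm. $\mathcal{W}\subset\mathbb{R}^{J\times K}$ is compact convex. $f_p(z)=\frac1I\sum_{i=1}^{I_p}\varphi(z;x_{pi},y_{pi})+\frac\beta Pr(z)$ is the local empirical risk of agent $p$ with convex loss $\varphi$ and convex regularizer $r$ on $\mathbb{R}^{J\times K}$, $\beta>0$; $f'_p(z)$ denotes a fixed subgradient of $f_p$ at $z$. *)

theory Defs
  imports "HOL-Analysis.Analysis"
begin

text \<open>Matrices in R^(J x K) are modelled as real^'k^'j; the inner product and norm
on this type are the Frobenius inner product and norm.\<close>

definition local_risk ::
  "nat \<Rightarrow> nat \<Rightarrow> nat \<Rightarrow> real \<Rightarrow> ('m \<Rightarrow> 'x \<Rightarrow> 'y \<Rightarrow> real) \<Rightarrow> ('m \<Rightarrow> real)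
    \<Rightarrow> (nat \<Rightarrow> 'x) \<Rightarrow> (nat \<Rightarrow> 'y) \<Rightarrow> 'm \<Rightarrow> real" where
  "local_risk I Ip P \<beta> \<phi> r xs ys z =
     (1 / real I) * (\<Sum>i=1..Ip. \<phi> z (xs i) (ys i)) + (\<beta> / real P) * r z"

definition is_subgradient :: "('a::real_inner \<Rightarrow> real) \<Rightarrow> 'a \<Rightarrow> 'a \<Rightarrow> bool" where
  "is_subgradient f z g \<longleftrightarrow> (\<forall>y. f z + inner g (y - z) \<le> f y)"

definition eta :: "nat \<Rightarrow> real" where
  "eta t = 1 / sqrt (real t)"

definition zobj :: "('m::real_inner) \<Rightarrow> real \<Rightarrow> real \<Rightarrow> 'm \<Rightarrow> 'm \<Rightarrow> 'm \<Rightarrow> 'm \<Rightarrow> 'm \<Rightarrow> real" where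
  "zobj g rho et w lam xi zt z =
     inner g z + rho / 2 * (norm (w - z + (1 / rho) *\<^sub>R (lam - xi)))\<^sup>2
       + 1 / (2 * et) * (norm (z - zt))\<^sup>2"

end

theory Submission
  imports Defs
begin

lemma norm_sq_lin: fixes v d :: "'a::real_inner"
  shows "(norm (v + s *\<^sub>R d))\<^sup>2 = (norm v)\<^sup>2 + 2 * s * inner v d + s\<^sup>2 * (norm d)\<^sup>2"
  unfolding power2_norm_eq_inner by (simp add: inner_simps algebra_simps power2_eq_square inner_commute)

lemma quad_expand: fixes g u x d zt :: "'a::real_inner"
  shows "inner g (x + s*\<^sub>R d) + a/2 * (norm (u - (x + s*\<^sub>R d)))\<^sup>2 + b/2 * (norm (x + s*\<^sub>R d - zt))\<^sup>2
   = inner g x + a/2*(norm(u-x))\<^sup>2 + b/2*(norm(x-zt))\<^sup>2 + s * inner (g - a*\<^sub>R (u-x) + b*\<^sub>R (x-zt)) d + s\<^sup>2*((a+b)/2)*(norm d)\<^sup>2"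
proof -
  have 1: "u - (x + s*\<^sub>R d) = (u - x) + (-s) *\<^sub>R d" by (simp add: algebra_simps)
  have 2: "x + s*\<^sub>R d - zt = (x - zt) + s *\<^sub>R d" by (simp add: algebra_simps)
  show ?thesis unfolding 1 2 norm_sq_lin
    by (simp add: inner_simps algebra_simps power2_eq_square)
qed

lemma opt_cond: fixes g u x zt :: "'a::real_inner"
  assumes W: "convex W" and x: "x \<in> W" and c: "a + b > 0"
    and min: "\<And>z. z \<in> W \<Longrightarrow> inner g x + a/2*(norm(u-x))\<^sup>2 + b/2*(norm(x-zt))\<^sup>2
         \<le> inner g z + a/2*(norm(u-z))\<^sup>2 + b/2*(norm(z-zt))\<^sup>2"
    and z: "z \<in> W"
  shows "inner (g - a*\<^sub>R (u-x) + b*\<^sub>R (x-zt)) (z - x) \<ge> 0"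
proof (rule ccontr)
  define G where "G = g - a*\<^sub>R (u-x) + b*\<^sub>R (x-zt)"
  define d where "d = z - x"
  define q where "q = inner G d"
  define c where "c = (a+b)/2"
  assume "\<not> ?thesis"
  hence q: "q < 0" unfolding q_def G_def d_def by simp
  have "d \<noteq> 0" using q unfolding q_def by auto
  hence nd: "(norm d)\<^sup>2 > 0" by simp
  have cp: "c > 0" using c unfolding c_def by simp
  define s where "s = min 1 (-q / (2 * c * (norm d)\<^sup>2))"
  have s0: "s > 0" unfolding s_def using q cp nd by (simp add: field_simps)
  have s1: "s \<le> 1" unfolding s_def by simp
  have scd: "s * c * (norm d)\<^sup>2 \<le> -q/2"
  proof -
    have "s \<le> -q / (2 * c * (norm d)\<^sup>2)" unfolding s_def by simp
    hence "s * (c * (norm d)\<^sup>2) \<le> -q / (2 * c * (norm d)\<^sup>2) * (c * (norm d)\<^sup>2)"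
      using cp nd by (intro mult_right_mono) auto
    also have "\<dots> = -q/2" using cp nd by (simp add: field_simps)
    finally show ?thesis by (simp add: mult.assoc)
  qed
  have mem: "x + s *\<^sub>R d \<in> W"
  proof -
    have "x + s *\<^sub>R d = (1 - s) *\<^sub>R x + s *\<^sub>R z" unfolding d_def by (simp add: algebra_simps)
    thus ?thesis using W x z s0 s1 by (simp add: convex_def)
  qed
  have "s * q + s\<^sup>2 * c * (norm d)\<^sup>2 \<ge> 0"
    using min[OF mem] quad_expand[of g x s d a u b zt] unfolding q_def G_def c_def by simp
  moreover have "s\<^sup>2 * c * (norm d)\<^sup>2 = s * (s * c * (norm d)\<^sup>2)" by (simp add: power2_eq_square)
  moreover have "s * (s * c * (norm d)\<^sup>2) \<le> s * (-q/2)" using scd s0 by (intro mult_left_mono) auto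
  moreover have "s * q < 0" using s0 q by (simp add: mult_pos_neg)
  ultimately show False by linarith
qed

theorem proposition3:
  fixes W :: "(real^'k^'j) set"
    and \<phi> :: "real^'k^'j \<Rightarrow> 'x \<Rightarrow> 'y \<Rightarrow> real"
    and r :: "real^'k^'j \<Rightarrow> real"
    and xs :: "nat \<Rightarrow> 'x" and ys :: "nat \<Rightarrow> 'y"
    and I Ip P :: nat and \<beta> L \<rho>max :: real
    and \<rho> :: "nat \<Rightarrow> real"
    and fp' :: "real^'k^'j \<Rightarrow> real^'k^'j"
    and t :: nat
    and w1 lam lam1 zt zt1 xi :: "real^'k^'j"
  defines "f \<equiv> local_risk I Ip P \<beta> \<phi> r xs ys"
  assumes W: "compact W" "convex W"
    and loss_convex: "\<And>x y. convex_on UNIV (\<lambda>z. \<phi> z x y)"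
    and reg_convex: "convex_on UNIV r"
    and \<beta>: "\<beta> > 0" and I: "I > 0" and P: "P > 0"
    and subgrad: "\<And>z. is_subgradient f z (fp' z)"
    and t: "t \<ge> 1"
    and rho_pos: "\<And>s. \<rho> s > 0"
    and rho_mono: "mono \<rho>"
    and rho_max: "\<And>s. \<rho> s \<le> \<rho>max"
    and lip: "L-lipschitz_on W f"
    and zt1_mem: "zt1 \<in> W"
    and zt1_min: "\<And>z. z \<in> W \<Longrightarrow>
        zobj (fp' zt) (\<rho> t) (eta t) w1 lam xi zt zt1 \<le> zobj (fp' zt) (\<rho> t) (eta t) w1 lam xi zt z"
    and lam1: "lam1 = lam + \<rho> t *\<^sub>R (w1 - zt1)"
  shows "\<forall>zp \<in> W.
     f zt - f zp - inner lam1 (zt1 - zp)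
       \<le> eta t * (norm (fp' zt + xi))\<^sup>2 / 2
          + 1 / (2 * eta t) * ((norm (zp - zt))\<^sup>2 - (norm (zp - zt1))\<^sup>2)
          + inner xi (zp - zt)"
  proof
  fix zp assume zp: "zp \<in> W"
  define g where "g = fp' zt"
  define \<eta> where "\<eta> = eta t"
  define \<rho>t where "\<rho>t = \<rho> t"
  define u where "u = w1 + (1 / \<rho>t) *\<^sub>R (lam - xi)"
  have eta_pos: "\<eta> > 0" using t unfolding \<eta>_def eta_def by simp
  have rp: "\<rho>t > 0" using rho_pos unfolding \<rho>t_def by simp
  have zo: "zobj g \<rho>t \<eta> w1 lam xi zt z = inner g z + \<rho>t/2*(norm(u-z))\<^sup>2 + (1/\<eta>)/2*(norm(z-zt))\<^sup>2" for z
    unfolding zobj_def u_def by (simp add: algebra_simps)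
  have B: "inner (g - \<rho>t*\<^sub>R (u-zt1) + (1/\<eta>)*\<^sub>R (zt1-zt)) (zp - zt1) \<ge> 0"
    apply (rule opt_cond[OF W(2) zt1_mem _ _ zp])
    using rp eta_pos apply (simp add: add_pos_pos)
    using zt1_min unfolding g_def[symmetric] \<rho>t_def[symmetric] \<eta>_def[symmetric] zo by blast
  have G: "g - \<rho>t*\<^sub>R (u-zt1) + (1/\<eta>)*\<^sub>R (zt1-zt) = g - lam1 + xi + (1/\<eta>)*\<^sub>R (zt1-zt)"
    unfolding lam1 u_def \<rho>t_def using rp by (simp add: algebra_simps \<rho>t_def)
  have A: "f zt - f zp \<le> inner g (zt - zp)"
    using subgrad[of zt] unfolding is_subgradient_def g_def
    by (smt (verit) inner_minus_right minus_diff_eq)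
  have C: "inner (g+xi) (zt - zt1) \<le> \<eta>/2*(norm (g+xi))\<^sup>2 + 1/(2*\<eta>)*(norm (zt-zt1))\<^sup>2"
  proof -
    have "0 \<le> (norm (\<eta> *\<^sub>R (g+xi) + (-1) *\<^sub>R (zt - zt1)))\<^sup>2" by simp
    also have "\<dots> = \<eta>\<^sup>2 * (norm (g+xi))\<^sup>2 - 2 * \<eta> * inner (g+xi) (zt-zt1) + (norm (zt-zt1))\<^sup>2"
      unfolding norm_sq_lin by (simp add: power2_eq_square)
    finally have "2 * \<eta> * inner (g+xi) (zt-zt1) \<le> \<eta>\<^sup>2 * (norm (g+xi))\<^sup>2 + (norm (zt-zt1))\<^sup>2" by simp
    hence "inner (g+xi) (zt-zt1) \<le> (\<eta>\<^sup>2 * (norm (g+xi))\<^sup>2 + (norm (zt-zt1))\<^sup>2) / (2*\<eta>)"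
      using eta_pos by (simp add: field_simps)
    also have "\<dots> = \<eta>/2*(norm (g+xi))\<^sup>2 + 1/(2*\<eta>)*(norm (zt-zt1))\<^sup>2"
      using eta_pos by (simp add: field_simps power2_eq_square)
    finally show ?thesis .
  qed
  have D: "2 * inner (zt1 - zt) (zp - zt1) = (norm (zp-zt))\<^sup>2 - (norm (zp-zt1))\<^sup>2 - (norm (zt-zt1))\<^sup>2"
  proof -
    have "zp - zt = (zp - zt1) + 1 *\<^sub>R (zt1 - zt)" by simp
    hence "(norm (zp-zt))\<^sup>2 = (norm (zp-zt1))\<^sup>2 + 2 * inner (zp-zt1) (zt1-zt) + (norm (zt1-zt))\<^sup>2"
      using norm_sq_lin[of "zp-zt1" 1 "zt1-zt"] by simp
    thus ?thesis by (simp add: inner_commute norm_minus_commute)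
  qed
  have B2: "inner g (zp - zt1) - inner lam1 (zp - zt1) + inner xi (zp - zt1) + (1/\<eta>) * inner (zt1-zt) (zp - zt1) \<ge> 0"
    using B unfolding G inner_add_left inner_diff_left inner_scaleR_left by simp
  have E: "inner g (zt - zp) = inner g (zt - zt1) - inner g (zp - zt1)" by (simp add: inner_simps)
  have F: "inner xi (zp - zt1) = inner xi (zp - zt) + inner xi (zt - zt1)" by (simp add: inner_simps)
  have H: "inner lam1 (zt1 - zp) = - inner lam1 (zp - zt1)" by (simp add: inner_simps)
  have K: "inner (g+xi) (zt - zt1) = inner g (zt - zt1) + inner xi (zt - zt1)" by (simp add: inner_simps)
  have M: "(1/\<eta>) * inner (zt1-zt) (zp - zt1) = 1/(2*\<eta>) * ((norm (zp-zt))\<^sup>2 - (norm (zp-zt1))\<^sup>2) - 1/(2*\<eta>)*(norm (zt-zt1))\<^sup>2"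
  proof -
    have D': "inner (zt1 - zt) (zp - zt1) = ((norm (zp-zt))\<^sup>2 - (norm (zp-zt1))\<^sup>2 - (norm (zt-zt1))\<^sup>2) / 2"
      using D by (metis (no_types) nonzero_mult_div_cancel_left zero_neq_numeral)
    show ?thesis unfolding D' using eta_pos by (simp add: field_simps)
  qed
  show "f zt - f zp - inner lam1 (zt1 - zp)
       \<le> eta t * (norm (fp' zt + xi))\<^sup>2 / 2
          + 1 / (2 * eta t) * ((norm (zp - zt))\<^sup>2 - (norm (zp - zt1))\<^sup>2)
          + inner xi (zp - zt)"
    using A B2 C E F H K M unfolding g_def[symmetric] \<eta>_def[symmetric] by linarith
qed

end
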